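(* Let $L>0$, $H\in(0,\infty]$, $D\ge1$, and let $v_1,\dots,v_{D+1}\in\mathbb R^m$ be orthonormal. With $\ell=\min\{L,\ H/(10(D+1)^{1.5})\}$, $\eta=10(D+1)^{1.5}\ell$, $\tilde f(x)=\max_{1\le r\le D+1}(\ell v_r^\top x-5\ell^2(r-1)/\eta)$ and $f(x)=\inf_y\{\tilde f(y)+\frac\eta2\|y-x\|^2\}$, every $x\in\mathbb R^m$ with $|v_{D+1}^\top x|\le\ell/\eta$ satisfies \[f(x)-\min_{\|x'\|\le1}f(x')\ \ge\ \min\Big\{\frac{L}{2\sqrt{D+1}},\ \frac{H}{20(D+1)^2}\Big\}.\] *)

theory Defs
  imports "HOL-Analysis.Analysis"
begin

definition hard_ell :: "real \<Rightarrow> ereal \<Rightarrow> nat \<Rightarrow> real" where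
  "hard_ell L H D = real_of_ereal (min (ereal L) (H / ereal (10 * real (D+1) powr 1.5)))"

definition hard_eta :: "real \<Rightarrow> ereal \<Rightarrow> nat \<Rightarrow> real" where
  "hard_eta L H D = 10 * real (D+1) powr 1.5 * hard_ell L H D"

definition hard_ftilde :: "real \<Rightarrow> real \<Rightarrow> nat \<Rightarrow> (nat \<Rightarrow> 'a::euclidean_space) \<Rightarrow> 'a \<Rightarrow> real" where
  "hard_ftilde ell eta D v x =
     Max ((\<lambda>r. ell * (v r \<bullet> x) - 5 * ell^2 * real (r - 1) / eta) ` {1..D+1})"

definition moreau_env :: "real \<Rightarrow> ('a::real_normed_vector \<Rightarrow> real) \<Rightarrow> 'a \<Rightarrow> real" where
  "moreau_env eta g x = (INF y. g y + eta / 2 * (norm (y - x))^2)"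

end

theory Submission
  imports Defs
begin

lemma quad: fixes l e t :: real assumes "e>0" shows "- l*t + e/2*t^2 \<ge> - (l^2/(2 * e))"
proof -
  have "0 \<le> (e*t - l)^2" by simp
  hence "0 \<le> (e*t-l)^2/(2 * e)" using assms by simp
  moreover have "(e*t-l)^2/(2 * e) = - l*t + e/2*t^2 + l^2/(2 * e)" using assms
    by (simp add: field_simps power2_eq_square)
  ultimately show ?thesis by linarith
qed

lemma pw: "real (D+1) powr 1.5 = real (D+1) * sqrt (real (D+1))"
proof -
  have "real (D+1) powr (1 + 1/2) = real (D+1) powr 1 * real (D+1) powr (1/2)"
    by (rule powr_add)
  thus ?thesis by (simp add: powr_half_sqrt)
qed

lemma ftilde_ge:
  fixes v :: "nat \<Rightarrow> 'a::euclidean_space"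
  assumes "r \<in> {1..D+1}"
  shows "hard_ftilde l e D v y \<ge> l * (v r \<bullet> y) - 5 * l^2 * real (r - 1) / e"
  unfolding hard_ftilde_def
  by (rule Max_ge) (use assms in auto)

lemma g_ge:
  fixes v :: "nat \<Rightarrow> 'a::euclidean_space"
  assumes l: "l \<ge> 0" and e: "e > 0" and nv: "norm (v (D+1)) = 1"
  shows "hard_ftilde l e D v y + e/2 * (norm (y - z))^2
     \<ge> l * (v (D+1) \<bullet> z) - l^2/(2 * e) - 5 * l^2 * real D / e"
proof -
  define t where "t = norm (y - z)"
  have f: "hard_ftilde l e D v y \<ge> l * (v (D+1) \<bullet> y) - 5 * l^2 * real D / e"
    using ftilde_ge[where r="D+1" and D=D and l=l and e=e and v=v and y=y] by simp
  have "(- v (D+1)) \<bullet> (y - z) \<le> norm (- v (D+1)) * norm (y - z)"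
    by (rule norm_cauchy_schwarz)
  hence "v (D+1) \<bullet> (y - z) \<ge> - t" using nv unfolding t_def by (simp add: inner_minus_left)
  hence "v (D+1) \<bullet> y \<ge> v (D+1) \<bullet> z - t" by (simp add: inner_diff_right)
  hence "l * (v (D+1) \<bullet> y) \<ge> l * (v (D+1) \<bullet> z) - l * t"
    using l by (metis mult_left_mono right_diff_distrib)
  moreover have "- l*t + e/2*t^2 \<ge> - (l^2/(2 * e))" using quad e by blast
  ultimately show ?thesis using f unfolding t_def by linarith
qed

lemma env_ge:
  fixes v :: "nat \<Rightarrow> 'a::euclidean_space"
  assumes l: "l \<ge> 0" and e: "e > 0" and nv: "norm (v (D+1)) = 1"
  shows "moreau_env e (hard_ftilde l e D v) z
     \<ge> l * (v (D+1) \<bullet> z) - l^2/(2 * e) - 5 * l^2 * real D / e"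
  unfolding moreau_env_def
  by (rule cINF_greatest) (use g_ge[where v=v, OF assms] in auto)

lemma env_le:
  fixes v :: "nat \<Rightarrow> 'a::euclidean_space"
  assumes l: "l \<ge> 0" and e: "e > 0" and nv: "norm (v (D+1)) = 1"
  shows "moreau_env e (hard_ftilde l e D v) z \<le> hard_ftilde l e D v z"
proof -
  have "bdd_below (range (\<lambda>y. hard_ftilde l e D v y + e / 2 * (norm (y - z))^2))"
    using g_ge[where v=v, OF assms] by (intro bdd_belowI2) blast
  from cINF_lower[OF this, of z] show ?thesis unfolding moreau_env_def by simp
qed

theorem lemma5:
  fixes L :: real and H :: ereal and D :: nat and v :: "nat \<Rightarrow> 'a::euclidean_space"
    and x :: 'a
  assumes "L > 0" and "H > 0" and "D \<ge> 1"
    and "\<forall>r\<in>{1..D+1}. \<forall>s\<in>{1..D+1}. v r \<bullet> v s = (if r = s then 1 else 0)"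
    and "\<bar>v (D+1) \<bullet> x\<bar> \<le> hard_ell L H D / hard_eta L H D"
  shows "ereal (moreau_env (hard_eta L H D) (hard_ftilde (hard_ell L H D) (hard_eta L H D) D v) x
           - (INF x'\<in>cball 0 1. moreau_env (hard_eta L H D)
                 (hard_ftilde (hard_ell L H D) (hard_eta L H D) D v) x'))
         \<ge> min (ereal (L / (2 * sqrt (real (D+1))))) (H / ereal (20 * real (D+1)^2))"
proof -
  define l where "l = hard_ell L H D"
  define e where "e = hard_eta L H D"
  define s where "s = sqrt (real (D+1))"
  define K where "K = 10 * real (D+1) powr 1.5"
  define F where "F = moreau_env e (hard_ftilde l e D v)"
  have s0: "s > 0" unfolding s_def by simp
  have ss: "s * s = real (D+1)" unfolding s_def by simp
  have KK: "K = 10 * real (D+1) * s" unfolding K_def s_def using pw by simp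
  have K0: "K > 0" unfolding KK using s0 by simp
  have "K * (2 * s) = 20 * real (D+1) * (s * s)" unfolding KK by (simp add: algebra_simps)
  hence K20: "K * (2 * s) = 20 * real (D+1)^2" unfolding ss by (simp add: power2_eq_square)
  have lR: "l > 0 \<and> min (ereal (L / (2 * s))) (H / ereal (20 * real (D+1)^2)) \<le> ereal (l / (2 * s))"
  proof (cases H)
    case (real h)
    hence h0: "h > 0" using assms(2) by simp
    have "l = min L (h / K)" unfolding l_def hard_ell_def K_def[symmetric] real
      using K0 by (simp add: min_def)
    moreover have eq: "h / (20 * real (D+1)^2) = (h/K) / (2 * s)" using K20 K0 s0
      by (metis divide_divide_eq_left)
    moreover have "H / ereal (20 * real (D+1)^2) = ereal ((h/K) / (2 * s))"
      unfolding real eq[symmetric] by simp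
    moreover have "min (L / (2 * s)) ((h/K) / (2 * s)) \<le> min L (h/K) / (2 * s)"
      using s0 by (cases "L \<le> h/K") (auto simp: min_def divide_right_mono)
    ultimately show ?thesis using h0 K0 assms(1) s0
      by (auto simp: min_def)
  next
    case PInf
    have "l = L" unfolding l_def hard_ell_def K_def[symmetric] PInf using K0 by simp
    thus ?thesis using PInf assms(1) by simp
  next
    case MInf thus ?thesis using assms(2) by simp
  qed
  have l0: "l > 0" using lR by simp
  have eK: "e = K * l" unfolding e_def l_def hard_eta_def K_def by simp
  have e0: "e > 0" using eK K0 l0 by simp
  have nv: "norm (v (D+1)) = 1" using assms(4) by (simp add: norm_eq_1)
  have vx: "v (D+1) \<bullet> x \<ge> - (l / e)" using assms(5) unfolding l_def e_def by linarith
  have Fx: "F x \<ge> l * (v (D+1) \<bullet> x) - l^2/(2 * e) - 5 * l^2 * real D / e"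
    unfolding F_def by (rule env_ge[where v=v and D=D, OF _ e0 nv]) (use l0 in simp)
  have lx: "l * (v (D+1) \<bullet> x) \<ge> - (l * (l / e))" using vx l0
    by (metis minus_mult_right mult_left_mono less_imp_le)
  have Fx2: "F x \<ge> - (l / (2 * s))"
  proof -
    have a: "l * (l / e) = l / K" "l^2/(2 * e) = l/(2 * K)" "5 * l^2 * real D / e = 5 * l * real D / K"
      using eK K0 l0 by (auto simp: power2_eq_square field_simps)
    have "l / K + l/(2 * K) + 5 * l * real D / K = l * (3 + 10 * real D) / (2 * K)"
      using K0 by (simp add: field_simps)
    also have "\<dots> \<le> l * (10 * real (D+1)) / (2 * K)"
      using K0 l0 by (intro divide_right_mono mult_left_mono) auto
    also have "\<dots> = l / (2 * s)"
    proof -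
      have "10 * real (D+1) > 0" by simp
      have gen: "\<And>c::real. c > 0 \<Longrightarrow> l * c / (2 * (c * s)) = l / (2 * s)"
        using s0 by (simp add: field_simps)
      show ?thesis unfolding KK by (rule gen) (simp add: add_pos_pos)
    qed
    finally show ?thesis using Fx lx a by linarith
  qed
  have bdd: "bdd_below (F ` cball 0 1)"
  proof (rule bdd_belowI2)
    fix z :: 'a assume z: "z \<in> cball 0 1"
    have "\<bar>v (D+1) \<bullet> z\<bar> \<le> norm (v (D+1)) * norm z" by (rule Cauchy_Schwarz_ineq2)
    hence "v (D+1) \<bullet> z \<ge> -1" using z nv by auto
    hence "l * (v (D+1) \<bullet> z) \<ge> - l" using l0
      by (metis minus_mult_right mult.right_neutral mult_left_mono less_imp_le)
    moreover have "F z \<ge> l * (v (D+1) \<bullet> z) - l^2/(2 * e) - 5 * l^2 * real D / e"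
      unfolding F_def by (rule env_ge[where v=v and D=D, OF _ e0 nv]) (use l0 in simp)
    ultimately show "- l - l^2/(2 * e) - 5 * l^2 * real D / e \<le> F z" by linarith
  qed
  define x' where "x' = (- (1/s)) *\<^sub>R (\<Sum>q\<in>{1..D+1}. v q)"
  have vr: "v r \<bullet> x' = - (1/s)" if r: "r \<in> {1..D+1}" for r
  proof -
    have "v r \<bullet> x' = - (1/s) * (\<Sum>q\<in>{1..D+1}. v r \<bullet> v q)"
      unfolding x'_def by (simp only: inner_scaleR_right inner_sum_right real_scaleR_def)
    also have "(\<Sum>q\<in>{1..D+1}. v r \<bullet> v q) = (\<Sum>q\<in>{1..D+1}. if r = q then 1 else 0)"
      using assms(4) r by (intro sum.cong) auto
    also have "\<dots> = 1" using r by simp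
    finally show ?thesis by simp
  qed
  have "x' \<bullet> x' = - (1/s) * (\<Sum>q\<in>{1..D+1}. v q \<bullet> x')"
    unfolding x'_def by (simp only: inner_scaleR_left inner_sum_left real_scaleR_def)
  also have "\<dots> = - (1/s) * (\<Sum>q\<in>{1..D+1}. - (1/s))" using vr by simp
  also have "\<dots> = 1" using ss s0 by (simp add: field_simps)
  finally have "norm x' = 1" by (simp add: norm_eq_1)
  hence x'c: "x' \<in> cball 0 1" by simp
  have ft: "hard_ftilde l e D v x' \<le> - (l / s)"
    unfolding hard_ftilde_def
  proof (subst Max_le_iff, simp, simp, intro ballI)
    fix y assume "y \<in> (\<lambda>r. l * (v r \<bullet> x') - 5 * l\<^sup>2 * real (r - 1) / e) ` {1..D + 1}"
    then obtain r where r: "r \<in> {1..D+1}" and y: "y = l * (v r \<bullet> x') - 5 * l\<^sup>2 * real (r - 1) / e"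
      by auto
    have "5 * l\<^sup>2 * real (r - 1) / e \<ge> 0" using e0 by simp
    thus "y \<le> - (l / s)" using y vr[OF r] by simp
  qed
  have I: "(INF z\<in>cball 0 1. F z) \<le> - (l / s)"
  proof -
    have "(INF z\<in>cball 0 1. F z) \<le> F x'" by (rule cINF_lower[OF bdd x'c])
    also have "\<dots> \<le> hard_ftilde l e D v x'" unfolding F_def
      by (rule env_le[where v=v and D=D, OF _ e0 nv]) (use l0 in simp)
    finally show ?thesis using ft by simp
  qed
  have "l / (2 * s) \<le> F x - (INF z\<in>cball 0 1. F z)"
  proof -
    have "l / s = l/(2 * s) + l/(2 * s)" by (simp add: field_simps)
    thus ?thesis using I Fx2 by linarith
  qed
  hence "ereal (l / (2 * s)) \<le> ereal (F x - (INF z\<in>cball 0 1. F z))" by simp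
  with lR show ?thesis unfolding F_def l_def e_def s_def by (meson order.trans)
qed

end
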